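(* Let $1\le i,m\le n$. Then $\mathsf{L}^i_n=\langle\mathbf{ŁV}_{n+1},F_{i/n}\rangle$ is maximal with respect to $\mathsf{L}^{i/n}_m=\langle\mathbf{ŁV}_{m+1},F_{i/n}\cap\mathrm{ŁV}_{m+1}\rangle$ if and only if there are a prime number $q$ and an integer $k\ge1$ such that $n=q^k$ and $m=q^{k-1}$.
   Context: $\mathbf{ŁV}_{n+1}=(\{0,\frac1n,\dots,\frac{n-1}n,1\},\neg,\to)$ with $\neg x=1-x$, $x\to y=\min\{1,1-x+y\}$; $\mathbf{ŁV}_{m+1}$ is a subalgebra of $\mathbf{ŁV}_{n+1}$ iff $m\mid n$. $F_{i/n}=\{x\in\mathrm{ŁV}_{n+1}:x\ge i/n\}$. Matrix logic consequence: $\Gamma\vdash\varphi$ iff every evaluation sending $\Gamma$ into the designated set sends $\varphi$ into it. $L_1$ is maximal w.r.t. $L_2$ if ${\vdash_{L_1}}\subsetneq{\vdash_{L_2}}$ and for every formula $\varphi$ with $\vdash_{L_2}\varphi$ but $\nvdash_{L_1}\varphi$, the logic obtained from $L_1$ by adding all substitution instances of $\varphi$ as axioms coincides with $L_2$. *)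

theory Defs
  imports Complex_Main "HOL-Computational_Algebra.Primes"
begin

datatype fm = Var nat | Neg fm | Imp fm fm

fun subst :: "(nat \<Rightarrow> fm) \<Rightarrow> fm \<Rightarrow> fm" where
  "subst \<sigma> (Var x) = \<sigma> x"
| "subst \<sigma> (Neg a) = Neg (subst \<sigma> a)"
| "subst \<sigma> (Imp a b) = Imp (subst \<sigma> a) (subst \<sigma> b)"

fun eval :: "(nat \<Rightarrow> rat) \<Rightarrow> fm \<Rightarrow> rat" where
  "eval e (Var x) = e x"
| "eval e (Neg a) = 1 - eval e a"
| "eval e (Imp a b) = min 1 (1 - eval e a + eval e b)"

text \<open>Universe of the algebra LV_{n+1}: {0, 1/n, ..., 1}.\<close>
definition LV :: "nat \<Rightarrow> rat set" where
  "LV n = {of_nat k / of_nat n | k. k \<le> n}"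

definition Filt :: "nat \<Rightarrow> nat \<Rightarrow> rat set" where
  "Filt n i = {x \<in> LV n. x \<ge> of_nat i / of_nat n}"

definition mcons :: "rat set \<Rightarrow> rat set \<Rightarrow> fm set \<Rightarrow> fm \<Rightarrow> bool" where
  "mcons A D \<Gamma> \<phi> \<longleftrightarrow>
     (\<forall>e. (\<forall>x. e x \<in> A) \<longrightarrow> (\<forall>\<gamma>\<in>\<Gamma>. eval e \<gamma> \<in> D) \<longrightarrow> eval e \<phi> \<in> D)"

definition ax_ext :: "(fm set \<Rightarrow> fm \<Rightarrow> bool) \<Rightarrow> fm \<Rightarrow> fm set \<Rightarrow> fm \<Rightarrow> bool" where
  "ax_ext C \<phi> \<Gamma> \<psi> \<longleftrightarrow> C (\<Gamma> \<union> range (\<lambda>\<sigma>. subst \<sigma> \<phi>)) \<psi>"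

definition maximal_wrt :: "(fm set \<Rightarrow> fm \<Rightarrow> bool) \<Rightarrow> (fm set \<Rightarrow> fm \<Rightarrow> bool) \<Rightarrow> bool" where
  "maximal_wrt C1 C2 \<longleftrightarrow>
     (\<forall>\<Gamma> \<phi>. C1 \<Gamma> \<phi> \<longrightarrow> C2 \<Gamma> \<phi>) \<and> \<not> (\<forall>\<Gamma> \<phi>. C2 \<Gamma> \<phi> \<longrightarrow> C1 \<Gamma> \<phi>) \<and>
     (\<forall>\<phi>. C2 {} \<phi> \<and> \<not> C1 {} \<phi> \<longrightarrow> ax_ext C1 \<phi> = C2)"

end

theory Submission
  imports Defs
begin


definition tr :: "rat \<Rightarrow> rat" where "tr y = max 0 (min 1 y)"

definition top :: "nat \<Rightarrow> fm" where "top v = Imp (Var v) (Var v)"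
definition oplus :: "fm \<Rightarrow> fm \<Rightarrow> fm" where "oplus a b = Imp (Neg a) b"
definition otimes :: "fm \<Rightarrow> fm \<Rightarrow> fm" where "otimes a b = Neg (Imp a (Neg b))"

fun Tr :: "nat \<Rightarrow> nat \<Rightarrow> int \<Rightarrow> fm" where
  "Tr v 0 b = (if b \<ge> 1 then top v else Neg (top v))"
| "Tr v (Suc a) b = oplus (Tr v a b) (otimes (Var v) (Tr v a (b+1)))"

lemma eval_oplus: "eval e (oplus a b) = min 1 (eval e a + eval e b)"
  by (simp add: oplus_def)
lemma eval_otimes: "eval e (otimes a b) = 1 - min 1 (2 - eval e a - eval e b)"
  by (simp add: otimes_def)

lemma eval_Tr: "0 \<le> e v \<Longrightarrow> e v \<le> 1 \<Longrightarrow> eval e (Tr v a b) = tr (of_nat a * e v + of_int b)"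
proof (induction a arbitrary: b)
  case 0
  then show ?case by (auto simp: top_def tr_def)
next
  case (Suc a)
  show ?case using Suc.IH[of b] Suc.IH[of "b+1"] Suc.prems
    by (simp add: eval_oplus eval_otimes tr_def algebra_simps min_def max_def)
qed

definition NE :: "nat \<Rightarrow> nat \<Rightarrow> int \<Rightarrow> fm" where
  "NE v N c = oplus (Tr v N (-c)) (Neg (Tr v N (1 - c)))"

lemma LV_mem: "x \<in> LV N \<longleftrightarrow> (\<exists>k. k \<le> N \<and> x = of_nat k / of_nat N)"
  by (auto simp: LV_def)

lemma tr_int: "tr (of_int z) = (if z \<ge> 1 then 1 else if z \<le> 0 then 0 else 0)"
  by (auto simp: tr_def)

lemma eval_NE:
  assumes "N > 0" "e v \<in> LV N"
  shows "eval e (NE v N c) = (if e v = of_int c / of_nat N then 0 else 1)"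
proof -
  obtain k where k: "k \<le> N" "e v = of_nat k / of_nat N" using assms LV_mem by blast
  have r: "0 \<le> e v" "e v \<le> 1" using k assms by (auto simp: divide_le_eq)
  have m: "of_nat N * e v = of_int (int k)" using k assms by simp
  have eq: "e v = of_int c / of_nat N \<longleftrightarrow> int k = c"
  proof -
    have "e v = of_int c / of_nat N \<longleftrightarrow> of_nat N * e v = of_int c" using assms by (auto simp: field_simps)
    also have "\<dots> \<longleftrightarrow> int k = c" using m by (metis of_int_eq_iff)
    finally show ?thesis .
  qed
  have "eval e (NE v N c) = min 1 (tr (of_int (int k - c)) + (1 - tr (of_int (int k - c + 1))))"
    unfolding NE_def eval_oplus using eval_Tr[of e v, OF r] m by (simp add: algebra_simps)
  also have "\<dots> = (if int k = c then 0 else 1)"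
    unfolding tr_def by (cases "int k - c \<ge> 1"; cases "int k = c"; simp)
  finally show ?thesis using eq by simp
qed


lemma eval_subst: "eval e (subst \<sigma> \<phi>) = eval (\<lambda>w. eval e (\<sigma> w)) \<phi>"
  by (induction \<phi>) auto

lemma one_LV: "N > 0 \<Longrightarrow> 1 \<in> LV N"
  using LV_mem[of 1 N] by force

lemma LV_neg: "N > 0 \<Longrightarrow> x \<in> LV N \<Longrightarrow> 1 - x \<in> LV N"
proof -
  assume N: "N > 0" and "x \<in> LV N"
  then obtain a where a: "a \<le> N" "x = of_nat a / of_nat N" by (auto simp: LV_mem)
  have "1 - x = of_nat (N - a) / of_nat N" using a N by (simp add: field_simps of_nat_diff)
  then show ?thesis unfolding LV_mem by (intro exI[of _ "N-a"]) auto
qed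

lemma LV_imp: "N > 0 \<Longrightarrow> x \<in> LV N \<Longrightarrow> y \<in> LV N \<Longrightarrow> min 1 (1 - x + y) \<in> LV N"
proof -
  assume N: "N > 0" and "x \<in> LV N" "y \<in> LV N"
  then obtain a b where a: "a \<le> N" "x = of_nat a / of_nat N" "b \<le> N" "y = of_nat b / of_nat N"
    by (auto simp: LV_mem)
  show ?thesis
  proof (cases "a \<le> b")
    case True
    have "x \<le> y" using a True by (simp add: divide_right_mono)
    then have "min 1 (1 - x + y) = 1" by simp
    then show ?thesis using one_LV N by simp
  next
    case False
    have "y < x" using a False N by (simp add: divide_strict_right_mono)
    then have "min 1 (1 - x + y) = 1 - x + y" by simp
    also have "\<dots> = of_nat (N - a + b) / of_nat N" using a N False
      by (simp add: field_simps of_nat_diff)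
    finally have "min 1 (1 - x + y) = of_nat (N - a + b) / of_nat N" .
    moreover have "N - a + b \<le> N" using False a by simp
    ultimately show ?thesis using LV_mem by blast
  qed
qed

lemma eval_LV: "N > 0 \<Longrightarrow> (\<forall>x. e x \<in> LV N) \<Longrightarrow> eval e \<phi> \<in> LV N"
  by (induction \<phi>) (auto intro: LV_neg LV_imp)

lemma LV_sub: "d > 0 \<Longrightarrow> N > 0 \<Longrightarrow> d dvd N \<Longrightarrow> LV d \<subseteq> LV N"
proof
  fix x assume d: "d > 0" "N > 0" "d dvd N" and "x \<in> LV d"
  then obtain a where a: "a \<le> d" "x = of_nat a / of_nat d" by (auto simp: LV_mem)
  obtain r where r: "N = d * r" using d by auto
  have "r > 0" using r d by (cases r) auto
  then have "x = of_nat (a * r) / of_nat N" using a r d by (simp add: field_simps)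
  moreover have "a * r \<le> N" using a r by simp
  ultimately show "x \<in> LV N" using LV_mem by blast
qed

lemma zero_LV: "0 \<in> LV N"
  using LV_mem[of 0 N] by force

lemma inv_LV: "d > 0 \<Longrightarrow> N > 0 \<Longrightarrow> 1 / of_nat d \<in> LV N \<Longrightarrow> d dvd N"
proof -
  assume d: "d > 0" "N > 0" "1 / of_nat d \<in> LV N"
  then obtain a where a: "a \<le> N" "(1::rat) / of_nat d = of_nat a / of_nat N" by (auto simp: LV_mem)
  then have "of_nat N = (of_nat (a * d) :: rat)" using d by (simp add: field_simps)
  then have "N = a * d" by (metis of_nat_eq_iff)
  then show ?thesis by simp
qed

lemma inv_in_LV: "d > 0 \<Longrightarrow> 1 / of_nat d \<in> LV d"
  using LV_mem[of "1 / of_nat d" d] by (rule_tac iffD2, auto intro: exI[of _ 1])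



lemma pow_of_only_prime:
  fixes n q :: nat
  shows "n > 0 \<Longrightarrow> (\<forall>p. prime p \<and> p dvd n \<longrightarrow> p = q) \<Longrightarrow> \<exists>k. n = q ^ k"
proof (induction n rule: less_induct)
  case (less n)
  show ?case
  proof (cases "n = 1")
    case True then show ?thesis by (intro exI[of _ 0]) simp
  next
    case False
    then obtain p where p: "prime p" "p dvd n" using prime_factor_nat by blast
    then have pq: "p = q" using less.prems by blast
    obtain n' where n': "n = p * n'" using p by auto
    have p1: "p > 1" using p prime_gt_1_nat by blast
    have "n' > 0" using n' less.prems by (cases n') auto
    moreover have "n' < n" using n' p1 \<open>n' > 0\<close> by simp
    moreover have "\<forall>p. prime p \<and> p dvd n' \<longrightarrow> p = q"
    proof (intro allI impI)
      fix p' assume p': "prime p' \<and> p' dvd n'"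
      then have "p' dvd n" using n' by simp
      then show "p' = q" using less.prems(2) p' by blast
    qed
    ultimately obtain k where "n' = q ^ k" using less.IH by blast
    then show ?thesis using n' pq by (intro exI[of _ "Suc k"]) simp
  qed
qed

lemma nt:
  fixes m n :: nat
  assumes m: "m > 0" "m dvd n" "m < n" and H: "\<forall>d. d dvd n \<and> d < n \<longrightarrow> d dvd m"
  shows "\<exists>q k. prime q \<and> k \<ge> 1 \<and> n = q ^ k \<and> m = q ^ (k - 1)"
proof -
  obtain r where r: "n = m * r" using m by auto
  have "r \<noteq> 1" using r m by auto
  then obtain q where q: "prime q" "q dvd r" using prime_factor_nat by blast
  obtain s where s: "r = q * s" using q by auto
  have q1: "q > 1" using q prime_gt_1_nat by blast
  have "s > 0" using s r m by (cases s) auto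
  have "m * s dvd n" using r s by simp
  moreover have "m * s < n" using r s q1 m \<open>s > 0\<close> by simp
  ultimately have "m * s dvd m" using H by blast
  then have "m * s dvd m * 1" by simp
  then have "s dvd 1" using m by (subst (asm) nat_mult_dvd_cancel1) auto
  then have "s = 1" by simp
  then have nq: "n = m * q" using r s by simp
  have "\<forall>p. prime p \<and> p dvd n \<longrightarrow> p = q"
  proof (intro allI impI)
    fix p assume p: "prime p \<and> p dvd n"
    obtain t where t: "n = p * t" using p by auto
    have p1: "p > 1" using p prime_gt_1_nat by blast
    have "t > 0" using t m by (cases t) auto
    have "t dvd n" "t < n" using t p1 \<open>t > 0\<close> by auto
    then have "t dvd m" using H by blast
    then obtain u where u: "m = t * u" by auto
    have "t * p = t * (u * q)"
    proof -
      have "t * p = n" using t by (simp add: mult.commute)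
      also have "\<dots> = m * q" by (rule nq)
      also have "\<dots> = t * (u * q)" using u by (simp add: mult.assoc)
      finally show ?thesis .
    qed
    then have "p = u * q \<or> t = 0" by (simp only: mult_cancel1)
    with \<open>t > 0\<close> have "p = u * q" by simp
    then have "q dvd p" by simp
    then have "q = 1 \<or> q = p" using p prime_nat_iff by blast
    then show "p = q" using q1 by auto
  qed
  moreover have "n > 0" using m by simp
  ultimately obtain k where k: "n = q ^ k" using pow_of_only_prime[of n q] by blast
  have "k \<ge> 1"
  proof (rule ccontr)
    assume "\<not> k \<ge> 1"
    then have "k = 0" by simp
    then have "n = 1" using k by simp
    with m show False by simp
  qed
  moreover have "m = q ^ (k - 1)"
  proof -
    obtain k' where k': "k = Suc k'" using \<open>k \<ge> 1\<close> by (cases k) auto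
    have a1: "q ^ k = q ^ k' * q" by (simp only: k' power_Suc2)
    have "m * q = q ^ k" by (simp only: nq[symmetric] k)
    then have mq: "m * q = q ^ k' * q" using a1 by (rule trans)
    have q0: "q \<noteq> 0" using q1 by simp
    have "m = q ^ k'" using mult_right_cancel[OF q0, of m "q ^ k'"] mq by blast
    then show ?thesis by (simp only: k' diff_Suc_1)
  qed
  ultimately show ?thesis using q k by blast
qed


lemma gen:
  assumes n: "n > 0" and a: "a \<le> n" "a \<noteq> 0" "coprime a n" and y: "y \<in> LV n"
  shows "\<exists>t. \<forall>e::nat\<Rightarrow>rat. e v = of_nat a / of_nat n \<longrightarrow> eval e t = y"
proof -
  obtain c where c: "c \<le> n" "y = of_nat c / of_nat n" using y by (auto simp: LV_mem)
  obtain X Y where XY: "a * X = n * Y + gcd a n" using bezout_nat[OF a(2)] by blast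
  then have XY1: "a * X = n * Y + 1" using a by simp
  then have h: "(of_nat (a*X)::rat) = of_nat (n*Y+1)" by simp
  then have h2: "of_nat a * of_nat X = (of_nat n * of_nat Y + 1 :: rat)" by simp
  have nz: "(of_nat n :: rat) \<noteq> 0" using n by simp
  show ?thesis
  proof (intro exI allI impI)
    fix e :: "nat \<Rightarrow> rat" assume ev: "e v = of_nat a / of_nat n"
    have r: "0 \<le> e v" "e v \<le> 1" using ev a n by (auto simp: divide_le_eq)
    have "of_nat (X * c) * e v = (of_nat a * of_nat X) * of_nat c / (of_nat n :: rat)"
      using ev by simp
    also have "\<dots> = (of_nat n * of_nat Y + 1) * of_nat c / of_nat n" using h2 by simp
    also have "\<dots> = of_nat Y * of_nat c + of_nat c / of_nat n" using nz by (simp add: divide_simps) (simp add: algebra_simps)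
    finally have eq: "of_nat (X * c) * e v + of_int (- int (Y * c)) = y" using c by simp
    have "0 \<le> y" "y \<le> 1" using c n by (auto simp: divide_le_eq)
    then show "eval e (Tr v (X * c) (- int (Y * c))) = y"
      using eval_Tr[of e v, OF r] eq by (simp add: tr_def)
  qed
qed

lemma Filt_iff: "x \<in> Filt n i \<longleftrightarrow> x \<in> LV n \<and> of_nat i / of_nat n \<le> x"
  by (simp add: Filt_def)

lemma one_Filt: "n > 0 \<Longrightarrow> i \<le> n \<Longrightarrow> 1 \<in> Filt n i"
  by (simp add: Filt_iff one_LV divide_le_eq)

lemma zero_Filt: "n > 0 \<Longrightarrow> 1 \<le> i \<Longrightarrow> 0 \<notin> Filt n i"
  by (auto simp: Filt_iff not_le intro!: divide_pos_pos)

lemma NE_at: "N > 0 \<Longrightarrow> e 0 \<in> LV N \<Longrightarrow> eval e (NE 0 N c) = (if e 0 = of_int c / of_nat N then 0 else 1)"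
  using eval_NE by blast

lemma taut_iff: "mcons A D {} \<phi> \<longleftrightarrow> (\<forall>e. (\<forall>x. e x \<in> A) \<longrightarrow> eval e \<phi> \<in> D)"
  by (simp add: mcons_def)

theorem corollary5p3:
  fixes i m n :: nat
  assumes "1 \<le> i" "i \<le> n" "1 \<le> m" "m \<le> n"
  shows "maximal_wrt (mcons (LV n) (Filt n i)) (mcons (LV m) (Filt n i \<inter> LV m))
     \<longleftrightarrow> (\<exists>q k. prime q \<and> k \<ge> 1 \<and> n = q ^ k \<and> m = q ^ (k - 1))"
proof -
  have n0: "n > 0" and m0: "m > 0" using assms by auto
  define C1 where "C1 = mcons (LV n) (Filt n i)"
  define C2 where "C2 = mcons (LV m) (Filt n i \<inter> LV m)"
  have F1: "1 \<in> Filt n i" using one_Filt n0 assms by blast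
  have F0: "0 \<notin> Filt n i" using zero_Filt n0 assms by blast
  have one_m: "1 \<in> LV m" using one_LV m0 by blast
  have notC1: "\<not> C1 {} (NE 0 n 1)"
  proof
    assume H: "C1 {} (NE 0 n 1)"
    have "1 / of_nat n \<in> LV n" using inv_in_LV n0 by blast
    then have "eval (\<lambda>_. 1 / of_nat n) (NE 0 n 1) \<in> Filt n i"
      using H[unfolded C1_def taut_iff, THEN spec, of "\<lambda>_. 1 / of_nat n"] by simp
    moreover have "eval (\<lambda>_. 1 / of_nat n) (NE 0 n 1) = 0"
      using NE_at[OF n0, of "\<lambda>_. 1 / of_nat n" 1] inv_in_LV[OF n0] by simp
    ultimately show False using F0 by simp
  qed
  have C2phi: "C2 {} (NE 0 n 1)" if mn: "m dvd n" "m < n"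
    unfolding C2_def taut_iff
  proof (intro allI impI)
    fix e :: "nat \<Rightarrow> rat" assume e: "\<forall>x. e x \<in> LV m"
    have sub: "LV m \<subseteq> LV n" using LV_sub m0 n0 mn by blast
    have "e 0 \<noteq> 1 / of_nat n"
    proof
      assume "e 0 = 1 / of_nat n"
      then have "n dvd m" using inv_LV[OF n0 m0] e by metis
      then show False using mn m0 by (meson dvd_imp_le not_le)
    qed
    then have "eval e (NE 0 n 1) = 1" using NE_at[OF n0, of e 1] e sub by auto
    then show "eval e (NE 0 n 1) \<in> Filt n i \<inter> LV m" using F1 one_m by simp
  qed
  show ?thesis
  proof
    assume max: "maximal_wrt (mcons (LV n) (Filt n i)) (mcons (LV m) (Filt n i \<inter> LV m))"
    then have h1: "\<forall>\<Gamma> \<phi>. C1 \<Gamma> \<phi> \<longrightarrow> C2 \<Gamma> \<phi>" and h2: "\<not> (\<forall>\<Gamma> \<phi>. C2 \<Gamma> \<phi> \<longrightarrow> C1 \<Gamma> \<phi>)"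
      and h3: "\<forall>\<phi>. C2 {} \<phi> \<and> \<not> C1 {} \<phi> \<longrightarrow> ax_ext C1 \<phi> = C2"
      unfolding maximal_wrt_def C1_def C2_def by blast+
    have mdvd: "m dvd n"
    proof (rule ccontr)
      assume nd: "\<not> m dvd n"
      define N where "N = m * n"
      have N0: "N > 0" using m0 n0 N_def by simp
      have val: "(of_int (int n) / of_nat N :: rat) = 1 / of_nat m"
        using n0 m0 N_def by (simp add: field_simps)
      have "C1 {} (NE 0 N (int n))"
        unfolding C1_def taut_iff
      proof (intro allI impI)
        fix e :: "nat \<Rightarrow> rat" assume e: "\<forall>x. e x \<in> LV n"
        have sub: "LV n \<subseteq> LV N" using LV_sub[OF n0 N0] N_def by simp
        have "e 0 \<noteq> 1 / of_nat m"
        proof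
          assume "e 0 = 1 / of_nat m"
          then have "m dvd n" using inv_LV[OF m0 n0] e by metis
          then show False using nd by simp
        qed
        then have "eval e (NE 0 N (int n)) = 1" using NE_at[OF N0, of e "int n"] e sub val by auto
        then show "eval e (NE 0 N (int n)) \<in> Filt n i" using F1 by simp
      qed
      then have H: "C2 {} (NE 0 N (int n))" using h1 by blast
      have "1 / of_nat m \<in> LV m" using inv_in_LV m0 by blast
      then have "eval (\<lambda>_. 1 / of_nat m) (NE 0 N (int n)) \<in> Filt n i \<inter> LV m"
        using H[unfolded C2_def taut_iff, THEN spec, of "\<lambda>_. 1 / of_nat m"] by simp
      moreover have "(1 / of_nat m :: rat) \<in> LV N" using LV_sub[OF m0 N0] N_def inv_in_LV[OF m0] by auto
      then have "eval (\<lambda>_. 1 / of_nat m) (NE 0 N (int n)) = 0"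
        using NE_at[OF N0, of "\<lambda>_. 1 / of_nat m" "int n"] val by simp
      ultimately show False using F0 by simp
    qed
    have mn: "m < n"
    proof (rule ccontr)
      assume "\<not> m < n"
      then have "m = n" using assms by simp
      then have "C2 = C1" unfolding C1_def C2_def
        by (metis Filt_iff Int_absorb2 subsetI)
      then show False using h2 by blast
    qed
    show "\<exists>q k. prime q \<and> k \<ge> 1 \<and> n = q ^ k \<and> m = q ^ (k - 1)"
    proof (rule ccontr)
      assume nr: "\<not> (\<exists>q k. prime q \<and> k \<ge> 1 \<and> n = q ^ k \<and> m = q ^ (k - 1))"
      have "\<not> (\<forall>d. d dvd n \<and> d < n \<longrightarrow> d dvd m)" using nt[OF m0 mdvd mn] nr by blast
      then obtain d where d: "d dvd n" "d < n" "\<not> d dvd m" by blast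
      have d0: "d > 0" using d n0 by (cases d) auto
      have valD: "(of_int (int (n div d)) / of_nat n :: rat) = 1 / of_nat d"
      proof -
        have "n = d * (n div d)" using d by simp
        then have "(of_nat n :: rat) = of_nat d * of_nat (n div d)" by (metis of_nat_mult)
        moreover have "n div d > 0" using d(2) d0 by (simp add: div_greater_zero_iff)
        ultimately show ?thesis using n0 d0 by (simp add: field_simps)
      qed
      have ax: "ax_ext C1 (NE 0 n 1) = C2" using h3 C2phi[OF mdvd mn] notC1 by blast
      have "C2 {} (NE 0 n (int (n div d)))"
        unfolding C2_def taut_iff
      proof (intro allI impI)
        fix e :: "nat \<Rightarrow> rat" assume e: "\<forall>x. e x \<in> LV m"
        have sub: "LV m \<subseteq> LV n" using LV_sub m0 n0 mdvd by blast
        have "e 0 \<noteq> 1 / of_nat d"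
        proof
          assume "e 0 = 1 / of_nat d"
          then have "d dvd m" using inv_LV[OF d0 m0] e by metis
          then show False using d by simp
        qed
        then have "eval e (NE 0 n (int (n div d))) = 1" using NE_at[OF n0, of e "int (n div d)"] e sub valD by auto
        then show "eval e (NE 0 n (int (n div d))) \<in> Filt n i \<inter> LV m" using F1 one_m by simp
      qed
      then have A: "ax_ext C1 (NE 0 n 1) {} (NE 0 n (int (n div d)))" using ax by simp
      define e :: "nat \<Rightarrow> rat" where "e = (\<lambda>_. 1 / of_nat d)"
      have subd: "LV d \<subseteq> LV n" using LV_sub d0 n0 d by blast
      have ed: "\<forall>x. e x \<in> LV d" using inv_in_LV[OF d0] e_def by simp
      then have en: "\<forall>x. e x \<in> LV n" using subd by blast
      have inst: "\<forall>\<gamma>\<in>{} \<union> range (\<lambda>\<sigma>. subst \<sigma> (NE 0 n 1)). eval e \<gamma> \<in> Filt n i"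
      proof
        fix \<gamma> assume "\<gamma> \<in> {} \<union> range (\<lambda>\<sigma>. subst \<sigma> (NE 0 n 1))"
        then obtain \<sigma> where g: "\<gamma> = subst \<sigma> (NE 0 n 1)" by auto
        define e' where "e' = (\<lambda>w. eval e (\<sigma> w))"
        have e'd: "\<forall>x. e' x \<in> LV d" using eval_LV[OF d0] ed e'_def by blast
        have "e' 0 \<noteq> 1 / of_nat n"
        proof
          assume "e' 0 = 1 / of_nat n"
          then have "n dvd d" using inv_LV[OF n0 d0] e'd by metis
          then show False using d d0 by (meson dvd_imp_le not_le)
        qed
        then have "eval e' (NE 0 n 1) = 1" using NE_at[OF n0, of e' 1] e'd subd by auto
        then show "eval e \<gamma> \<in> Filt n i" using g eval_subst e'_def F1 by simp
      qed
      have "eval e (NE 0 n (int (n div d))) \<in> Filt n i"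
        using A en inst unfolding ax_ext_def C1_def mcons_def by blast
      moreover have "eval e (NE 0 n (int (n div d))) = 0"
        using NE_at[OF n0, of e "int (n div d)"] en valD e_def by simp
      ultimately show False using F0 by simp
    qed
  next
    assume "\<exists>q k. prime q \<and> k \<ge> 1 \<and> n = q ^ k \<and> m = q ^ (k - 1)"
    then obtain q k where qk: "prime q" "k \<ge> 1" "n = q ^ k" "m = q ^ (k - 1)" by blast
    obtain k' where k': "k = Suc k'" using qk by (cases k) auto
    have nqm: "n = q * m" using qk k' by simp
    have q1: "q > 1" using qk prime_gt_1_nat by blast
    have mdvd: "m dvd n" using nqm by simp
    have mn: "m < n" using nqm q1 m0 by simp
    have sub: "LV m \<subseteq> LV n" using LV_sub m0 n0 mdvd by blast
    have h1: "\<forall>\<Gamma> \<phi>. C1 \<Gamma> \<phi> \<longrightarrow> C2 \<Gamma> \<phi>"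
    proof (intro allI impI)
      fix \<Gamma> \<phi> assume c1: "C1 \<Gamma> \<phi>"
      show "C2 \<Gamma> \<phi>" unfolding C2_def mcons_def
      proof (intro allI impI)
        fix e :: "nat \<Rightarrow> rat" assume e: "\<forall>x. e x \<in> LV m" and g: "\<forall>\<gamma>\<in>\<Gamma>. eval e \<gamma> \<in> Filt n i \<inter> LV m"
        have "eval e \<phi> \<in> Filt n i" using c1 e g sub unfolding C1_def mcons_def by blast
        moreover have "eval e \<phi> \<in> LV m" using eval_LV[OF m0] e by blast
        ultimately show "eval e \<phi> \<in> Filt n i \<inter> LV m" by simp
      qed
    qed
    have h2: "\<not> (\<forall>\<Gamma> \<phi>. C2 \<Gamma> \<phi> \<longrightarrow> C1 \<Gamma> \<phi>)"
      using C2phi[OF mdvd mn] notC1 by blast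
    have h3: "ax_ext C1 \<phi> = C2" if ph: "C2 {} \<phi>" "\<not> C1 {} \<phi>" for \<phi>
    proof (intro ext iffI)
      fix \<Gamma> \<psi> assume ax: "ax_ext C1 \<phi> \<Gamma> \<psi>"
      show "C2 \<Gamma> \<psi>" unfolding C2_def mcons_def
      proof (intro allI impI)
        fix e :: "nat \<Rightarrow> rat" assume e: "\<forall>x. e x \<in> LV m" and g: "\<forall>\<gamma>\<in>\<Gamma>. eval e \<gamma> \<in> Filt n i \<inter> LV m"
        have inst: "\<forall>\<gamma>\<in>\<Gamma> \<union> range (\<lambda>\<sigma>. subst \<sigma> \<phi>). eval e \<gamma> \<in> Filt n i"
        proof
          fix \<gamma> assume "\<gamma> \<in> \<Gamma> \<union> range (\<lambda>\<sigma>. subst \<sigma> \<phi>)"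
          then show "eval e \<gamma> \<in> Filt n i"
          proof
            assume "\<gamma> \<in> \<Gamma>" then show ?thesis using g by blast
          next
            assume "\<gamma> \<in> range (\<lambda>\<sigma>. subst \<sigma> \<phi>)"
            then obtain \<sigma> where gs: "\<gamma> = subst \<sigma> \<phi>" by auto
            have "\<forall>w. eval e (\<sigma> w) \<in> LV m" using eval_LV[OF m0] e by blast
            then have "eval (\<lambda>w. eval e (\<sigma> w)) \<phi> \<in> Filt n i \<inter> LV m"
              using ph(1)[unfolded C2_def taut_iff, THEN spec, of "\<lambda>w. eval e (\<sigma> w)"] by simp
            then show ?thesis using gs eval_subst by simp
          qed
        qed
        have "eval e \<psi> \<in> Filt n i" using ax inst e sub unfolding ax_ext_def C1_def mcons_def by blast
        moreover have "eval e \<psi> \<in> LV m" using eval_LV[OF m0] e by blast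
        ultimately show "eval e \<psi> \<in> Filt n i \<inter> LV m" by simp
      qed
    next
      fix \<Gamma> \<psi> assume c2: "C2 \<Gamma> \<psi>"
      show "ax_ext C1 \<phi> \<Gamma> \<psi>" unfolding ax_ext_def C1_def mcons_def
      proof (intro allI impI)
        fix e :: "nat \<Rightarrow> rat" assume e: "\<forall>x. e x \<in> LV n"
          and g: "\<forall>\<gamma>\<in>\<Gamma> \<union> range (\<lambda>\<sigma>. subst \<sigma> \<phi>). eval e \<gamma> \<in> Filt n i"
        have em: "\<forall>x. e x \<in> LV m"
        proof (rule ccontr)
          assume "\<not> (\<forall>x. e x \<in> LV m)"
          then obtain v where v: "e v \<notin> LV m" by blast
          obtain a where a: "a \<le> n" "e v = of_nat a / of_nat n" using e LV_mem by blast
          have qa: "\<not> q dvd a"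
          proof
            assume "q dvd a"
            then obtain b where b: "a = q * b" by auto
            have "b \<le> m" using a b nqm q1 by simp
            moreover have "e v = of_nat b / of_nat m" using a b nqm q1 by simp
            ultimately show False using v LV_mem by blast
          qed
          have a0: "a \<noteq> 0" using qa by (metis dvd_0_right)
          have "coprime q a" using prime_imp_coprime[OF qk(1) qa] .
          then have "coprime a n" using qk by (simp add: coprime_commute)
          then have "\<forall>w. \<exists>t. \<forall>e0::nat\<Rightarrow>rat. e0 v = of_nat a / of_nat n \<longrightarrow> eval e0 t = e' w"
            if "\<forall>x. e' x \<in> LV n" for e'
            using gen[OF n0 a(1) a0] that by blast
          obtain e' where e': "\<forall>x. e' x \<in> LV n" "eval e' \<phi> \<notin> Filt n i"
            using ph(2) unfolding C1_def taut_iff by blast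
          obtain T where T: "\<forall>w. \<forall>e0::nat\<Rightarrow>rat. e0 v = of_nat a / of_nat n \<longrightarrow> eval e0 (T w) = e' w"
            using \<open>\<And>e'. \<forall>x. e' x \<in> LV n \<Longrightarrow> _\<close>[OF e'(1)] by metis
          have "(\<lambda>w. eval e (T w)) = e'" using T a by auto
          then have "eval e (subst T \<phi>) = eval e' \<phi>" using eval_subst by simp
          moreover have "eval e (subst T \<phi>) \<in> Filt n i" using g by blast
          ultimately show False using e' by simp
        qed
        have "\<forall>\<gamma>\<in>\<Gamma>. eval e \<gamma> \<in> Filt n i \<inter> LV m" using g eval_LV[OF m0] em by blast
        then have "eval e \<psi> \<in> Filt n i \<inter> LV m" using c2 em unfolding C2_def mcons_def by blast
        then show "eval e \<psi> \<in> Filt n i" by simp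
      qed
    qed
    show "maximal_wrt (mcons (LV n) (Filt n i)) (mcons (LV m) (Filt n i \<inter> LV m))"
      unfolding maximal_wrt_def using h1 h2 h3 unfolding C1_def C2_def by blast
  qed
qed

end
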